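(* Let $S\subseteq[d]$ with $|S|=\kappa\ge2$, let $\theta\in\mathbb{R}^d$ satisfy $|\theta_i|\le b$ for all $i$, and let $\sigma$ be a ranking of $S$ drawn from the PL model with parameter $\theta$, with $\sigma^{-1}(i)$ denoting the position of item $i$. Then for any two distinct items $i,i'\in S$ and any $1\le\ell,\ell_1,\ell_2\le\kappa-1$: $$\mathbb{P}_\theta\big[\sigma^{-1}(i)>\ell,\ \sigma^{-1}(i')>\ell\big]\ \ge\ \frac{e^{-4b}(\kappa-\ell)(\kappa-\ell-1)}{\kappa(\kappa-1)}\Big(1-\frac{\ell}{\kappa}\Big)^{2e^{2b}-2},$$ $$\mathbb{P}_\theta\big[\sigma^{-1}(i)=\ell\big]\ \le\ \frac{e^{6b}}{\kappa-\ell},$$ $$\mathbb{P}_\theta\big[\sigma^{-1}(i)=\ell_1,\ \sigma^{-1}(i')=\ell_2\big]\ \le\ \frac{e^{10b}}{(\kappa-\ell_1-1)(\kappa-\ell_2)},$$ where the last right-hand side is interpreted as $+\infty$ if its denominator vanishes.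
   Context: PL model: items $[d]$, parameter $\theta\in\mathbb{R}^d$; when a set $S$ is offered, a ranking $\sigma:[|S|]\to S$ (a bijection from positions to items; position 1 is most preferred) is drawn with probability $\prod_{i=1}^{|S|-1}e^{\theta_{\sigma(i)}}/\sum_{i'=i}^{|S|}e^{\theta_{\sigma(i')}}$. *)

theory Defs
  imports Complex_Main "HOL-Library.FuncSet"
begin

text \<open>Rankings of a finite item set S: bijections from positions {1..|S|} to S
  (position 1 is most preferred), taken extensional so the set is finite.\<close>
definition rankings :: "nat set \<Rightarrow> (nat \<Rightarrow> nat) set" where
  "rankings S = {\<sigma>. \<sigma> \<in> extensional {1..card S} \<and> bij_betw \<sigma> {1..card S} S}"

definition PL_prob :: "(nat \<Rightarrow> real) \<Rightarrow> nat set \<Rightarrow> (nat \<Rightarrow> nat) \<Rightarrow> real" where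
  "PL_prob \<theta> S \<sigma> =
     (\<Prod>i\<in>{1..card S - 1}. exp (\<theta> (\<sigma> i)) / (\<Sum>i'\<in>{i..card S}. exp (\<theta> (\<sigma> i'))))"

definition PL_event :: "(nat \<Rightarrow> real) \<Rightarrow> nat set \<Rightarrow> ((nat \<Rightarrow> nat) \<Rightarrow> bool) \<Rightarrow> real" where
  "PL_event \<theta> S E = (\<Sum>\<sigma>\<in>{\<sigma>\<in>rankings S. E \<sigma>}. PL_prob \<theta> S \<sigma>)"

definition pos :: "nat set \<Rightarrow> (nat \<Rightarrow> nat) \<Rightarrow> nat \<Rightarrow> nat" where
  "pos S \<sigma> i = the_inv_into {1..card S} \<sigma> i"

end

theory Submission
  imports Defs "HOL-Combinatorics.Multiset_Permutations"
begin


fun pl :: "(nat \<Rightarrow> real) \<Rightarrow> nat list \<Rightarrow> real" where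
  "pl w [] = 1"
| "pl w (x # xs) = w x / (w x + sum_list (map w xs)) * pl w xs"

definition Pr :: "(nat \<Rightarrow> real) \<Rightarrow> nat set \<Rightarrow> (nat list \<Rightarrow> bool) \<Rightarrow> real" where
  "Pr w S E = (\<Sum>xs\<in>permutations_of_set S. if E xs then pl w xs else 0)"

lemma pl_nonneg: "(\<And>j. w j > 0) \<Longrightarrow> pl w xs \<ge> 0"
proof (induction xs)
  case (Cons x xs)
  have "sum_list (map w xs) \<ge> 0" using Cons.prems by (intro sum_list_nonneg) (auto intro: less_imp_le)
  then have "w x / (w x + sum_list (map w xs)) \<ge> 0" using Cons.prems[of x] by simp
  then show ?case using Cons by (simp del: times_divide_eq_left)
qed simp

lemma Pr_nonneg: "(\<And>j. w j > 0) \<Longrightarrow> Pr w S E \<ge> 0"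
  unfolding Pr_def by (auto intro!: sum_nonneg pl_nonneg)

lemma Pr_cong: "(\<And>xs. xs \<in> permutations_of_set S \<Longrightarrow> E xs = E' xs) \<Longrightarrow> Pr w S E = Pr w S E'"
  unfolding Pr_def by (rule sum.cong) auto

lemma Pr_false: "(\<And>xs. xs \<in> permutations_of_set S \<Longrightarrow> \<not> E xs) \<Longrightarrow> Pr w S E = 0"
  unfolding Pr_def by (rule sum.neutral) auto

lemma Pr_rec:
  assumes "finite S" "S \<noteq> {}"
  shows "Pr w S E = (\<Sum>x\<in>S. w x / sum w S * Pr w (S - {x}) (\<lambda>xs. E (x # xs)))"
proof -
  have "Pr w S E = (\<Sum>xs\<in>(\<Union>x\<in>S. (\<lambda>xs. x # xs) ` permutations_of_set (S - {x})). if E xs then pl w xs else 0)"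
    unfolding Pr_def using permutations_of_set_nonempty[OF assms(2)] by simp
  also have "\<dots> = (\<Sum>x\<in>S. \<Sum>xs\<in>(\<lambda>xs. x # xs) ` permutations_of_set (S - {x}). if E xs then pl w xs else 0)"
    by (rule sum.UNION_disjoint) (use assms in auto)
  also have "\<dots> = (\<Sum>x\<in>S. \<Sum>xs\<in>permutations_of_set (S - {x}). if E (x # xs) then pl w (x # xs) else 0)"
    by (rule sum.cong[OF refl], subst sum.reindex) (auto simp: inj_on_def)
  also have "\<dots> = (\<Sum>x\<in>S. w x / sum w S * Pr w (S - {x}) (\<lambda>xs. E (x # xs)))"
  proof (rule sum.cong[OF refl])
    fix x assume x: "x \<in> S"
    have "(\<Sum>xs\<in>permutations_of_set (S - {x}). if E (x # xs) then pl w (x # xs) else 0)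
       = (\<Sum>xs\<in>permutations_of_set (S - {x}). w x / sum w S * (if E (x # xs) then pl w xs else 0))"
    proof (rule sum.cong[OF refl])
      fix xs assume "xs \<in> permutations_of_set (S - {x})"
      then have "set xs = S - {x}" "distinct xs" by (auto dest: permutations_of_setD)
      then have "sum_list (map w xs) = sum w (S - {x})" by (metis sum_list_distinct_conv_sum_set)
      moreover have "w x + sum w (S - {x}) = sum w S" using x assms(1) by (simp add: sum.remove)
      ultimately show "(if E (x # xs) then pl w (x # xs) else 0) = w x / sum w S * (if E (x # xs) then pl w xs else 0)"
        by simp
    qed
    then show "(\<Sum>xs\<in>permutations_of_set (S - {x}). if E (x # xs) then pl w (x # xs) else 0) = w x / sum w S * Pr w (S - {x}) (\<lambda>xs. E (x # xs))"
      unfolding Pr_def by (simp add: sum_distrib_left)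
  qed
  finally show ?thesis .
qed

lemma sumw_pos: fixes w :: "nat \<Rightarrow> real" shows "finite S \<Longrightarrow> S \<noteq> {} \<Longrightarrow> (\<And>j. w j > 0) \<Longrightarrow> sum w S > 0"
  by (intro sum_pos) auto

lemma weights_sum: fixes w :: "nat \<Rightarrow> real" shows "finite S \<Longrightarrow> S \<noteq> {} \<Longrightarrow> (\<And>j. w j > 0) \<Longrightarrow> (\<Sum>x\<in>S. w x / sum w S) = 1"
  using sumw_pos[of S w] by (simp add: sum_divide_distrib[symmetric])

lemma Pr_true: "finite S \<Longrightarrow> (\<And>j. w j > 0) \<Longrightarrow> Pr w S (\<lambda>_. True) = 1"
proof (induction "card S" arbitrary: S)
  case 0
  then have "S = {}" by simp
  then show ?case by (simp add: Pr_def)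
next
  case (Suc n)
  then have ne: "S \<noteq> {}" by auto
  have "Pr w S (\<lambda>_. True) = (\<Sum>x\<in>S. w x / sum w S * Pr w (S - {x}) (\<lambda>_. True))"
    using Pr_rec[OF Suc.prems(1) ne] by simp
  also have "\<dots> = (\<Sum>x\<in>S. w x / sum w S)"
    by (rule sum.cong[OF refl]) (use Suc in auto)
  also have "\<dots> = 1" using weights_sum[OF Suc.prems(1) ne] Suc.prems(2) by blast
  finally show ?case .
qed

lemma Pr_le:
  assumes "finite S" "S \<noteq> {}" "\<And>j. w j > 0" "B \<ge> 0"
    and "\<And>x. x \<in> S \<Longrightarrow> Pr w (S - {x}) (\<lambda>xs. E (x # xs)) \<le> B"
  shows "Pr w S E \<le> B"
proof -
  have "Pr w S E = (\<Sum>x\<in>S. w x / sum w S * Pr w (S - {x}) (\<lambda>xs. E (x # xs)))"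
    using Pr_rec[OF assms(1,2)] .
  also have "\<dots> \<le> (\<Sum>x\<in>S. w x / sum w S * B)"
    using sumw_pos[of S w, OF assms(1,2)] assms(3,5)
    by (intro sum_mono mult_left_mono) (auto intro: less_imp_le)
  also have "\<dots> = (\<Sum>x\<in>S. w x / sum w S) * B" by (simp add: sum_distrib_right)
  also have "\<dots> = B" using weights_sum[of S w, OF assms(1,2,3)] by simp
  finally show ?thesis .
qed

lemma Pr_ge:
  assumes "finite S" "S \<noteq> {}" "\<And>j. w j > 0" "B \<ge> 0" "T \<subseteq> S"
    and "\<And>x. x \<in> T \<Longrightarrow> Pr w (S - {x}) (\<lambda>xs. E (x # xs)) \<ge> B"
  shows "Pr w S E \<ge> (\<Sum>x\<in>T. w x / sum w S) * B"
proof -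
  have "(\<Sum>x\<in>T. w x / sum w S) * B = (\<Sum>x\<in>T. w x / sum w S * B)" by (simp add: sum_distrib_right)
  also have "\<dots> \<le> (\<Sum>x\<in>T. w x / sum w S * Pr w (S - {x}) (\<lambda>xs. E (x # xs)))"
    using sumw_pos[of S w, OF assms(1,2)] assms(3,6)
    by (intro sum_mono mult_left_mono) (auto intro: less_imp_le)
  also have "\<dots> \<le> (\<Sum>x\<in>S. w x / sum w S * Pr w (S - {x}) (\<lambda>xs. E (x # xs)))"
  proof (rule sum_mono2)
    fix b assume "b \<in> S - T"
    have "0 \<le> w b / sum w S" using sumw_pos[of S w, OF assms(1,2,3)] assms(3)[of b] by simp
    then show "0 \<le> w b / sum w S * Pr w (S - {b}) (\<lambda>xs. E (b # xs))"
      using Pr_nonneg[of w, OF assms(3)] by (intro mult_nonneg_nonneg) auto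
  qed (use assms in auto)
  also have "\<dots> = Pr w S E" using Pr_rec[OF assms(1,2)] by simp
  finally show ?thesis .
qed

lemma first_bound:
  fixes w :: "nat \<Rightarrow> real"
  assumes "finite S" "i \<in> S" "lo > 0" "\<forall>j\<in>S. lo \<le> w j \<and> w j \<le> hi"
  shows "w i / sum w S \<le> (hi / lo) / real (card S)"
proof -
  have "real (card S) * lo \<le> sum w S" using assms(4) by (intro sum_bounded_below) auto
  moreover have "card S > 0" using assms(1,2) card_gt_0_iff by blast
  moreover have "w i \<le> hi" "w i \<ge> lo" using assms(2,4) by auto
  ultimately have "w i / sum w S \<le> hi / (real (card S) * lo)"
    using assms(3) by (intro frac_le) auto
  then show ?thesis by (simp add: mult.commute)
qed

lemma posA:
  fixes w :: "nat \<Rightarrow> real"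
  assumes wpos: "\<And>j. w j > 0" and lo: "lo > 0"
  shows "finite S \<Longrightarrow> i \<in> S \<Longrightarrow> p < card S \<Longrightarrow> \<forall>j\<in>S. lo \<le> w j \<and> w j \<le> hi \<Longrightarrow>
     Pr w S (\<lambda>xs. xs ! p = i) \<le> (hi / lo) / (real (card S) - real p)"
proof (induction p arbitrary: S)
  case 0
  have ne: "S \<noteq> {}" using 0 by auto
  have "Pr w S (\<lambda>xs. xs ! 0 = i) = (\<Sum>x\<in>S. w x / sum w S * Pr w (S - {x}) (\<lambda>xs. (x # xs) ! 0 = i))"
    using Pr_rec[OF 0(1) ne] .
  also have "\<dots> = (\<Sum>x\<in>S. if x = i then w x / sum w S else 0)"
  proof (rule sum.cong[OF refl])
    fix x assume "x \<in> S"
    show "w x / sum w S * Pr w (S - {x}) (\<lambda>xs. (x # xs) ! 0 = i) = (if x = i then w x / sum w S else 0)"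
      using Pr_true[of "S - {x}" w] Pr_false[of "S - {x}" "\<lambda>xs. (x # xs) ! 0 = i" w] 0(1) wpos by auto
  qed
  also have "\<dots> = w i / sum w S" using 0(1,2) by (simp add: sum.delta)
  also have "\<dots> \<le> (hi / lo) / real (card S)" using first_bound[OF 0(1,2) lo 0(4)] .
  finally show ?case by simp
next
  case (Suc p)
  have ne: "S \<noteq> {}" using Suc by auto
  have hl: "hi / lo \<ge> 0" using Suc.prems(2,4) lo by (smt (verit) divide_nonneg_pos)
  have "real (card S) - real (Suc p) > 0" using Suc.prems(3) by simp
  then have B0: "0 \<le> hi / lo / (real (card S) - real (Suc p))" using hl by (rule divide_nonneg_pos[rotated])
  show ?case
  proof (rule Pr_le[OF Suc.prems(1) ne wpos B0])
    fix x assume x: "x \<in> S"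
    have cS: "card (S - {x}) = card S - 1" using x Suc.prems(1) by simp
    show "Pr w (S - {x}) (\<lambda>xs. (x # xs) ! Suc p = i) \<le> hi / lo / (real (card S) - real (Suc p))"
    proof (cases "x = i")
      case True
      have "Pr w (S - {x}) (\<lambda>xs. (x # xs) ! Suc p = i) = 0"
      proof (rule Pr_false)
        fix xs assume "xs \<in> permutations_of_set (S - {x})"
        then have "set xs = S - {x}" "distinct xs" by (auto dest: permutations_of_setD)
        moreover have "length xs = card S - 1" using calculation cS by (metis distinct_card)
        moreover have "p < length xs" using calculation Suc.prems(3) by simp
        ultimately have "xs ! p \<in> S - {x}" by (metis nth_mem)
        then show "\<not> (x # xs) ! Suc p = i" using True by auto
      qed
      then show ?thesis using B0 by simp
    next
      case False
      have "Pr w (S - {x}) (\<lambda>xs. xs ! p = i) \<le> hi / lo / (real (card (S - {x})) - real p)"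
        using Suc.IH[of "S - {x}"] Suc.prems False cS by auto
      also have "real (card (S - {x})) - real p = real (card S) - real (Suc p)"
        using cS Suc.prems(3) by simp
      finally show ?thesis by simp
    qed
  qed
qed

lemma Pr_single:
  assumes "finite S" "a \<in> S"
    and "\<And>x. x \<in> S \<Longrightarrow> x \<noteq> a \<Longrightarrow> Pr w (S - {x}) (\<lambda>xs. E (x # xs)) = 0"
  shows "Pr w S E = w a / sum w S * Pr w (S - {a}) (\<lambda>xs. E (a # xs))"
proof -
  have ne: "S \<noteq> {}" using assms by auto
  have "Pr w S E = (\<Sum>x\<in>S. w x / sum w S * Pr w (S - {x}) (\<lambda>xs. E (x # xs)))"
    using Pr_rec[OF assms(1) ne] .
  also have "\<dots> = w a / sum w S * Pr w (S - {a}) (\<lambda>xs. E (a # xs)) + (\<Sum>x\<in>S - {a}. w x / sum w S * Pr w (S - {x}) (\<lambda>xs. E (x # xs)))"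
    by (rule sum.remove[OF assms(1,2)])
  also have "(\<Sum>x\<in>S - {a}. w x / sum w S * Pr w (S - {x}) (\<lambda>xs. E (x # xs))) = 0"
    using assms(3) by (intro sum.neutral) auto
  finally show ?thesis by simp
qed

lemma perm_nth_in:
  assumes "xs \<in> permutations_of_set (S - {x})" "finite S" "x \<in> S" "p < card S - 1"
  shows "xs ! p \<in> S - {x}"
proof -
  have "set xs = S - {x}" "distinct xs" using assms(1) by (auto dest: permutations_of_setD)
  moreover have "length xs = card S - 1" using calculation assms(2,3) by (metis distinct_card card_Diff_singleton)
  ultimately show ?thesis using assms(4) by (metis nth_mem)
qed

lemma posB:
  fixes w :: "nat \<Rightarrow> real"
  assumes wpos: "\<And>j. w j > 0" and lo: "lo > 0"
  shows "finite S \<Longrightarrow> i \<in> S \<Longrightarrow> i' \<in> S \<Longrightarrow> i \<noteq> i' \<Longrightarrow> p < card S \<Longrightarrow> q < card S \<Longrightarrow>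
     \<forall>j\<in>S. lo \<le> w j \<and> w j \<le> hi \<Longrightarrow>
     Pr w S (\<lambda>xs. xs ! p = i \<and> xs ! q = i') \<le> (hi / lo) * (hi / lo) / ((real (card S) - real p) * (real (card S) - real q))"
proof (induction p arbitrary: q S)
  case 0
  have hl: "hi / lo \<ge> 0" using 0 lo by (smt (verit) divide_nonneg_pos)
  have B0: "0 \<le> (hi / lo) * (hi / lo) / ((real (card S) - real 0) * (real (card S) - real q))"
    using 0(6) hl by (intro divide_nonneg_pos mult_pos_pos) auto
  show ?case
  proof (cases q)
    case 0
    have "Pr w S (\<lambda>xs. xs ! 0 = i \<and> xs ! q = i') = 0" using 0 \<open>i \<noteq> i'\<close> by (intro Pr_false) auto
    then show ?thesis using B0 by simp
  next
    case (Suc q')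
    have "Pr w S (\<lambda>xs. xs ! 0 = i \<and> xs ! q = i') = w i / sum w S * Pr w (S - {i}) (\<lambda>xs. (i # xs) ! 0 = i \<and> (i # xs) ! q = i')"
      by (rule Pr_single[OF 0(1,2)]) (auto intro: Pr_false)
    also have "\<dots> = w i / sum w S * Pr w (S - {i}) (\<lambda>xs. xs ! q' = i')" using Suc by simp
    also have "\<dots> \<le> (hi / lo / real (card S)) * (hi / lo / (real (card (S - {i})) - real q'))"
    proof (rule mult_mono)
      show "w i / sum w S \<le> hi / lo / real (card S)" using first_bound[OF 0(1,2) lo 0(7)] .
      show "Pr w (S - {i}) (\<lambda>xs. xs ! q' = i') \<le> hi / lo / (real (card (S - {i})) - real q')"
        using posA[OF wpos lo, where S="S - {i}" and i=i' and p=q' and hi=hi] 0 Suc by auto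
      show "0 \<le> hi / lo / real (card S)" by (rule divide_nonneg_nonneg[OF hl]) simp
      show "0 \<le> Pr w (S - {i}) (\<lambda>xs. xs ! q' = i')" using Pr_nonneg[of w, OF wpos] .
    qed
    also have "\<dots> = (hi / lo) * (hi / lo) / ((real (card S) - real 0) * (real (card S) - real q))"
      using Suc 0 by (simp add: of_nat_diff)
    finally show ?thesis .
  qed
next
  case (Suc p)
  have hl: "hi / lo \<ge> 0" using Suc.prems lo by (smt (verit) divide_nonneg_pos)
  have B0: "0 \<le> (hi / lo) * (hi / lo) / ((real (card S) - real (Suc p)) * (real (card S) - real q))"
    using Suc.prems(5,6) hl by (intro divide_nonneg_pos mult_pos_pos) auto
  show ?case
  proof (cases q)
    case 0
    have "Pr w S (\<lambda>xs. xs ! Suc p = i \<and> xs ! q = i') = w i' / sum w S * Pr w (S - {i'}) (\<lambda>xs. (i' # xs) ! Suc p = i \<and> (i' # xs) ! q = i')"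
      by (rule Pr_single[OF Suc.prems(1,3)]) (use 0 in \<open>auto intro: Pr_false\<close>)
    also have "\<dots> = w i' / sum w S * Pr w (S - {i'}) (\<lambda>xs. xs ! p = i)" using 0 by simp
    also have "\<dots> \<le> (hi / lo / real (card S)) * (hi / lo / (real (card (S - {i'})) - real p))"
    proof (rule mult_mono)
      show "w i' / sum w S \<le> hi / lo / real (card S)" using first_bound[OF Suc.prems(1,3) lo Suc.prems(7)] .
      show "Pr w (S - {i'}) (\<lambda>xs. xs ! p = i) \<le> hi / lo / (real (card (S - {i'})) - real p)"
        using posA[OF wpos lo, where S="S - {i'}" and i=i and p=p and hi=hi] Suc.prems by auto
      show "0 \<le> hi / lo / real (card S)" by (rule divide_nonneg_nonneg[OF hl]) simp
      show "0 \<le> Pr w (S - {i'}) (\<lambda>xs. xs ! p = i)" using Pr_nonneg[of w, OF wpos] .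
    qed
    also have "\<dots> = (hi / lo) * (hi / lo) / ((real (card S) - real (Suc p)) * (real (card S) - real q))"
      using Suc.prems 0 by (simp add: of_nat_diff)
    finally show ?thesis .
  next
    case (Suc q')
    have ne: "S \<noteq> {}" using Suc.prems by auto
    show ?thesis
    proof (rule Pr_le[OF Suc.prems(1) ne wpos B0])
      fix x assume x: "x \<in> S"
      have cS: "card (S - {x}) = card S - 1" using x Suc.prems(1) by simp
      show "Pr w (S - {x}) (\<lambda>xs. (x # xs) ! Suc p = i \<and> (x # xs) ! q = i') \<le> (hi / lo) * (hi / lo) / ((real (card S) - real (Suc p)) * (real (card S) - real q))"
      proof (cases "x = i \<or> x = i'")
        case True
        have "Pr w (S - {x}) (\<lambda>xs. (x # xs) ! Suc p = i \<and> (x # xs) ! q = i') = 0"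
        proof (rule Pr_false)
          fix xs assume xs: "xs \<in> permutations_of_set (S - {x})"
          have "xs ! p \<in> S - {x}" "xs ! q' \<in> S - {x}"
            using perm_nth_in[OF xs Suc.prems(1) x] Suc.prems(5,6) \<open>q = Suc q'\<close> by auto
          then show "\<not> ((x # xs) ! Suc p = i \<and> (x # xs) ! q = i')" using True \<open>q = Suc q'\<close> by auto
        qed
        then show ?thesis using B0 by simp
      next
        case False
        have "Pr w (S - {x}) (\<lambda>xs. xs ! p = i \<and> xs ! q' = i') \<le> (hi / lo) * (hi / lo) / ((real (card (S - {x})) - real p) * (real (card (S - {x})) - real q'))"
          using Suc.IH[of "S - {x}" q'] Suc.prems False cS \<open>q = Suc q'\<close> by auto
        also have "\<dots> = (hi / lo) * (hi / lo) / ((real (card S) - real (Suc p)) * (real (card S) - real q))"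
          using cS Suc.prems \<open>q = Suc q'\<close> by (simp add: of_nat_diff algebra_simps)
        finally show ?thesis using \<open>q = Suc q'\<close> by simp
      qed
    qed
  qed
qed

fun G :: "real \<Rightarrow> real \<Rightarrow> nat \<Rightarrow> real" where
  "G c k 0 = 1"
| "G c k (Suc l) = (k - 2) / (k - 2 + 2 * c) * G c (k - 1) l"

lemma G_nonneg: "c > 0 \<Longrightarrow> real l \<le> k - 1 \<Longrightarrow> G c k l \<ge> 0"
proof (induction l arbitrary: k)
  case (Suc l)
  have "(k - 2) / (k - 2 + 2 * c) \<ge> 0" using Suc.prems by (intro divide_nonneg_pos) auto
  moreover have "G c (k - 1) l \<ge> 0" using Suc by auto
  ultimately show ?case using mult_nonneg_nonneg by (metis G.simps(2))
qed simp

lemma frac_bound: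
  fixes R a lo hi K :: real
  assumes "lo > 0" "K \<ge> 0" "R \<ge> K * lo" "a \<le> 2 * hi" "a > 0"
  shows "K / (K + 2 * (hi / lo)) \<le> R / (R + a)"
proof -
  have hi: "hi > 0" using assms by linarith
  have c: "hi / lo > 0" using hi assms(1) by simp
  have R: "R \<ge> 0" using assms(1-3) by (smt (verit) mult_nonneg_nonneg)
  have "2 * (hi / lo) * R \<ge> 2 * (hi / lo) * (K * lo)" by (rule mult_left_mono[OF assms(3)]) (use c in simp)
  also have "2 * (hi / lo) * (K * lo) = 2 * hi * K" using assms(1) by simp
  finally have "2 * (hi / lo) * R \<ge> 2 * hi * K" .
  moreover have "2 * hi * K \<ge> a * K" using assms(2,4) by (simp add: mult_right_mono)
  ultimately have key: "K * (R + a) \<le> R * (K + 2 * (hi / lo))" by (simp add: algebra_simps)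
  have p1: "K + 2 * (hi / lo) > 0" using assms(2) c by simp
  have p2: "R + a > 0" using R assms(5) by simp
  show ?thesis using key p1 p2 by (simp add: divide_simps)
qed

lemma posC:
  fixes w :: "nat \<Rightarrow> real"
  assumes wpos: "\<And>j. w j > 0" and lo: "lo > 0"
  shows "finite S \<Longrightarrow> i \<in> S \<Longrightarrow> i' \<in> S \<Longrightarrow> i \<noteq> i' \<Longrightarrow> l \<le> card S - 1 \<Longrightarrow>
     \<forall>j\<in>S. lo \<le> w j \<and> w j \<le> hi \<Longrightarrow>
     Pr w S (\<lambda>xs. \<forall>n<l. xs ! n \<noteq> i \<and> xs ! n \<noteq> i') \<ge> G (hi / lo) (real (card S)) l"
proof (induction l arbitrary: S)
  case 0
  then show ?case using Pr_true[of S w] wpos by simp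
next
  case (Suc l)
  have ne: "S \<noteq> {}" using Suc by auto
  have hi: "hi \<ge> lo" using Suc.prems(2,6) by auto
  then have c: "hi / lo > 0" using lo by simp
  define T where "T = S - {i, i'}"
  have cT: "card T = card S - 2" using Suc.prems(1-4) unfolding T_def by (simp add: card_Diff_subset)
  have cS2: "card S \<ge> 2"
  proof -
    have "card {i, i'} \<le> card S" using Suc.prems(1-3) by (intro card_mono) auto
    then show ?thesis using Suc.prems(4) by simp
  qed
  have B0: "G (hi / lo) (real (card S) - 1) l \<ge> 0"
    using Suc.prems(5) cS2 c by (intro G_nonneg) auto
  have "Pr w S (\<lambda>xs. \<forall>n<Suc l. xs ! n \<noteq> i \<and> xs ! n \<noteq> i') \<ge> (\<Sum>x\<in>T. w x / sum w S) * G (hi / lo) (real (card S) - 1) l"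
  proof (rule Pr_ge[OF Suc.prems(1) ne wpos B0])
    show "T \<subseteq> S" unfolding T_def by auto
  next
    fix x assume x: "x \<in> T"
    have cS: "card (S - {x}) = card S - 1" using x Suc.prems(1) unfolding T_def by simp
    have "Pr w (S - {x}) (\<lambda>xs. \<forall>n<Suc l. (x # xs) ! n \<noteq> i \<and> (x # xs) ! n \<noteq> i')
        = Pr w (S - {x}) (\<lambda>xs. \<forall>n<l. xs ! n \<noteq> i \<and> xs ! n \<noteq> i')"
    proof (rule Pr_cong)
      fix xs
      have "(\<forall>n<Suc l. (x # xs) ! n \<noteq> i \<and> (x # xs) ! n \<noteq> i') \<longleftrightarrow>
            ((x # xs) ! 0 \<noteq> i \<and> (x # xs) ! 0 \<noteq> i') \<and> (\<forall>n<l. (x # xs) ! Suc n \<noteq> i \<and> (x # xs) ! Suc n \<noteq> i')"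
        by (auto simp: less_Suc_eq_0_disj)
      then show "(\<forall>n<Suc l. (x # xs) ! n \<noteq> i \<and> (x # xs) ! n \<noteq> i') = (\<forall>n<l. xs ! n \<noteq> i \<and> xs ! n \<noteq> i')"
        using x unfolding T_def by auto
    qed
    also have "\<dots> \<ge> G (hi / lo) (real (card (S - {x}))) l"
      using Suc.IH[of "S - {x}"] Suc.prems x cS unfolding T_def by auto
    finally show "G (hi / lo) (real (card S) - 1) l \<le> Pr w (S - {x}) (\<lambda>xs. \<forall>n<Suc l. (x # xs) ! n \<noteq> i \<and> (x # xs) ! n \<noteq> i')"
      using cS cS2 by (simp add: of_nat_diff)
  qed
  moreover have "(real (card S) - 2) / (real (card S) - 2 + 2 * (hi / lo)) \<le> (\<Sum>x\<in>T. w x / sum w S)"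
  proof -
    have W: "sum w S = sum w T + (w i + w i')"
    proof -
      have "sum w S = sum w (S - {i, i'}) + sum w {i, i'}"
        using Suc.prems(1-3) by (metis sum.subset_diff empty_subsetI insert_subset)
      then show ?thesis using Suc.prems(4) unfolding T_def by simp
    qed
    have "real (card T) * lo \<le> sum w T" using Suc.prems(6) unfolding T_def by (intro sum_bounded_below) auto
    then have "(real (card S) - 2) * lo \<le> sum w T" using cT cS2 by (simp add: of_nat_diff)
    moreover have "w i + w i' \<le> 2 * hi"
    proof -
      have "w i \<le> hi" "w i' \<le> hi" using Suc.prems(2,3,6) by auto
      then show ?thesis by simp
    qed
    moreover have "w i + w i' > 0" using wpos[of i] wpos[of i'] by simp
    ultimately have "(real (card S) - 2) / (real (card S) - 2 + 2 * (hi / lo)) \<le> sum w T / (sum w T + (w i + w i'))"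
      using lo cS2 by (intro frac_bound) auto
    also have "\<dots> = (\<Sum>x\<in>T. w x / sum w S)" using W by (simp add: sum_divide_distrib)
    finally show ?thesis .
  qed
  ultimately have "Pr w S (\<lambda>xs. \<forall>n<Suc l. xs ! n \<noteq> i \<and> xs ! n \<noteq> i') \<ge>
      (real (card S) - 2) / (real (card S) - 2 + 2 * (hi / lo)) * G (hi / lo) (real (card S) - 1) l"
    using B0 by (meson mult_right_mono order_trans)
  then show ?case by simp
qed

lemma factor_ineq:
  fixes n t :: real
  assumes n: "n \<ge> 0" and t: "t \<ge> 0"
  shows "n / (n + 2) * ((n + 1) / (n + 2)) powr t \<le> n / (n + 2 + t)"
proof -
  define L where "L = ln ((n + 2) / (n + 1))"
  have l1: "ln ((n + 1) / (n + 2)) \<le> (n + 1) / (n + 2) - 1" using n by (intro ln_le_minus_one) simp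
  have l2: "ln ((n + 1) / (n + 2)) = - L" unfolding L_def using n by (simp add: ln_div)
  have "(n + 1) / (n + 2) - 1 = - (1 / (n + 2))" using n by (simp add: field_simps)
  then have L: "L \<ge> 1 / (n + 2)" using l1 l2 by simp
  have "((n + 1) / (n + 2)) powr t = exp (t * ln ((n + 1) / (n + 2)))" using n by (simp add: powr_def)
  also have "\<dots> = inverse (exp (t * L))" using l2 by (simp add: exp_minus)
  finally have e: "((n + 1) / (n + 2)) powr t = inverse (exp (t * L))" .
  have "exp (t * L) \<ge> 1 + t * L" by (rule exp_ge_add_one_self)
  moreover have "t * L \<ge> t * (1 / (n + 2))" using L t by (rule mult_left_mono)
  moreover have "1 + t * (1 / (n + 2)) = (n + 2 + t) / (n + 2)" using n by (simp add: field_simps)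
  ultimately have ex: "exp (t * L) \<ge> (n + 2 + t) / (n + 2)" by linarith
  have pos: "(n + 2 + t) / (n + 2) > 0" using n t by simp
  have "inverse (exp (t * L)) \<le> inverse ((n + 2 + t) / (n + 2))"
    using ex pos by (rule le_imp_inverse_le)
  then have "inverse (exp (t * L)) \<le> (n + 2) / (n + 2 + t)" by simp
  then have "n / (n + 2) * ((n + 1) / (n + 2)) powr t \<le> n / (n + 2) * ((n + 2) / (n + 2 + t))"
    unfolding e using n by (intro mult_left_mono) auto
  also have "\<dots> = n / (n + 2 + t)"
  proof -
    have "n + 2 \<noteq> 0" "n + 2 + t \<noteq> 0" using n t by linarith+
    then show ?thesis by simp
  qed
  finally show ?thesis .
qed

lemma alg:
  fixes x y :: real
  assumes "x \<ge> 3"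
  shows "(x - (y + 1)) * (x - (y + 1) - 1) / (x * (x - 1))
       = (x - 2) / (x - 2 + 2) * ((x - 1 - y) * (x - 1 - y - 1) / ((x - 1) * (x - 1 - 1)))"
proof -
  define A where "A = (x - 1 - y) * (x - 1 - y - 1)"
  have A: "(x - (y + 1)) * (x - (y + 1) - 1) = A" unfolding A_def by (simp add: algebra_simps)
  have e: "x - 2 + 2 = x" "x - 1 - 1 = x - 2" by simp_all
  have nz: "x \<noteq> 0" "x - 1 \<noteq> 0" "x - 2 \<noteq> 0" using assms by auto
  have "(x - 2) / x * (A / ((x - 1) * (x - 2))) = ((x - 2) * A) / (x * ((x - 1) * (x - 2)))"
    by (rule times_divide_times_eq)
  also have "\<dots> = ((x - 2) * A) / ((x - 2) * (x * (x - 1)))" by (metis mult.commute mult.assoc)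
  also have "\<dots> = A / (x * (x - 1))" using nz(3) by (rule mult_divide_mult_cancel_left)
  finally have "(x - 2) / x * (A / ((x - 1) * (x - 2))) = A / (x * (x - 1))" .
  then show ?thesis unfolding A A_def[symmetric] e by simp
qed

lemma GF:
  fixes c :: real and K l :: nat
  assumes c: "c \<ge> 1"
  shows "2 \<le> K \<Longrightarrow> l \<le> K - 1 \<Longrightarrow>
    (real K - real l) * (real K - real l - 1) / (real K * (real K - 1)) * (1 - real l / real K) powr (2 * c - 2)
     \<le> G c (real K) l"
proof (induction l arbitrary: K)
  case 0
  then show ?case by simp
next
  case (Suc l)
  show ?case
  proof (cases "K = 2")
    case True
    then have "l = 0" using Suc.prems by simp
    then show ?thesis using True c by simp
  next
    case False
    then have K3: "K \<ge> 3" using Suc.prems by simp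
    define n where "n = real K - 2"
    define t where "t = 2 * c - 2"
    have n1: "n \<ge> 1" using K3 unfolding n_def by simp
    have t0: "t \<ge> 0" using c unfolding t_def by simp
    define F' where "F' = (real (K - 1) - real l) * (real (K - 1) - real l - 1) / (real (K - 1) * (real (K - 1) - 1)) * (1 - real l / real (K - 1)) powr t"
    have IH: "F' \<le> G c (real (K - 1)) l" unfolding F'_def t_def using Suc.IH[of "K - 1"] Suc.prems K3 by auto
    have rK: "real (K - 1) = real K - 1" using K3 by (simp add: of_nat_diff)
    have lK: "real l \<le> real K - 2" using Suc.prems by linarith
    have F'0: "F' \<ge> 0" unfolding F'_def rK using lK K3 by (intro mult_nonneg_nonneg divide_nonneg_pos) auto
    have fac: "n / (n + 2) * ((n + 1) / (n + 2)) powr t \<le> n / (n + 2 * c)"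
      using factor_ineq[of n t] n1 t0 unfolding t_def by (simp add: algebra_simps)
    have "(real K - real (Suc l)) * (real K - real (Suc l) - 1) / (real K * (real K - 1)) * (1 - real (Suc l) / real K) powr (2 * c - 2)
        = n / (n + 2) * ((n + 1) / (n + 2)) powr t * F'"
    proof -
      have split: "1 - real (Suc l) / real K = ((n + 1) / (n + 2)) * (1 - real l / (real K - 1))"
        unfolding n_def using K3 by (simp add: field_simps)
      have "(1 - real (Suc l) / real K) powr t = ((n + 1) / (n + 2)) powr t * (1 - real l / (real K - 1)) powr t"
        unfolding split using n1 lK K3 by (intro powr_mult; simp add: field_simps)
      moreover have "(real K - real (Suc l)) * (real K - real (Suc l) - 1) / (real K * (real K - 1))
          = n / (n + 2) * ((real K - 1 - real l) * (real K - 1 - real l - 1) / ((real K - 1) * (real K - 1 - 1)))"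
        unfolding n_def using alg[of "real K" "real l"] K3 by simp
      ultimately show ?thesis unfolding F'_def rK t_def by simp
    qed
    also have "\<dots> \<le> n / (n + 2 * c) * F'" using fac F'0 by (rule mult_right_mono)
    also have "\<dots> \<le> n / (n + 2 * c) * G c (real (K - 1)) l" using IH n1 c by (intro mult_left_mono) auto
    also have "\<dots> = G c (real K) (Suc l)" unfolding n_def rK by simp
    finally show ?thesis .
  qed
qed



lemma sl: "(\<Sum>j\<in>{1..length xs}. (w::nat\<Rightarrow>real) (xs ! (j - 1))) = sum_list (map w xs)"
proof -
  have "(\<Sum>j\<in>{1..length xs}. w (xs ! (j - 1))) = (\<Sum>k<length xs. w (xs ! k))"
    using sum.atLeast1_atMost_eq[of "\<lambda>j. w (xs ! (j - 1))" "length xs"] by simp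
  also have "\<dots> = sum_list (map w xs)" by (simp add: sum_list_sum_nth atLeast0LessThan)
  finally show ?thesis .
qed

lemma pl_nth: "pl w xs = (\<Prod>n\<in>{1..length xs}. w (xs ! (n - 1)) / (\<Sum>j\<in>{n..length xs}. w (xs ! (j - 1))))"
proof (induction xs)
  case Nil
  then show ?case by simp
next
  case (Cons x xs)
  let ?L = "length xs"
  let ?f = "\<lambda>n. w ((x # xs) ! (n - 1)) / (\<Sum>j\<in>{n..Suc ?L}. w ((x # xs) ! (j - 1)))"
  have "(\<Prod>n\<in>{1..Suc ?L}. ?f n) = ?f 1 * (\<Prod>n\<in>{Suc 1..Suc ?L}. ?f n)"
    by (rule prod.atLeast_Suc_atMost) simp
  also have "(\<Prod>n\<in>{Suc 1..Suc ?L}. ?f n) = (\<Prod>n\<in>{1..?L}. ?f (Suc n))"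
    by (rule prod.shift_bounds_cl_Suc_ivl)
  also have "\<dots> = (\<Prod>n\<in>{1..?L}. w (xs ! (n - 1)) / (\<Sum>j\<in>{n..?L}. w (xs ! (j - 1))))"
  proof (rule prod.cong[OF refl])
    fix n assume n: "n \<in> {1..?L}"
    have "(\<Sum>j\<in>{Suc n..Suc ?L}. w ((x # xs) ! (j - 1))) = (\<Sum>j\<in>{n..?L}. w ((x # xs) ! (Suc j - 1)))"
      by (rule sum.shift_bounds_cl_Suc_ivl)
    also have "\<dots> = (\<Sum>j\<in>{n..?L}. w (xs ! (j - 1)))"
      by (rule sum.cong[OF refl]) (use n in \<open>auto simp: nth_Cons'\<close>)
    finally have eq: "(\<Sum>j\<in>{Suc n..Suc ?L}. w ((x # xs) ! (j - 1))) = (\<Sum>j\<in>{n..?L}. w (xs ! (j - 1)))" .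
    have e2: "(x # xs) ! (Suc n - 1) = xs ! (n - 1)" using n by (auto simp: nth_Cons')
    show "?f (Suc n) = w (xs ! (n - 1)) / (\<Sum>j\<in>{n..?L}. w (xs ! (j - 1)))"
      by (simp only: eq e2)
  qed
  also have "?f 1 = w x / (w x + sum_list (map w xs))"
  proof -
    have "(\<Sum>j\<in>{1..Suc ?L}. w ((x # xs) ! (j - 1))) = (\<Sum>j\<in>{1..length (x # xs)}. w ((x # xs) ! (j - 1)))" by simp
    also have "\<dots> = sum_list (map w (x # xs))" by (rule sl)
    finally show ?thesis by simp
  qed
  finally show ?case using Cons by simp
qed

definition toF :: "nat \<Rightarrow> nat list \<Rightarrow> nat \<Rightarrow> nat" where
  "toF k xs = (\<lambda>n. if n \<in> {1..k} then xs ! (n - 1) else undefined)"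

lemma perm_len: "xs \<in> permutations_of_set S \<Longrightarrow> length xs = card S"
  by (metis distinct_card permutations_of_setD)

lemma toF_bij:
  assumes "finite S"
  shows "bij_betw (toF (card S)) (permutations_of_set S) (rankings S)"
proof (rule bij_betw_byWitness[where f' = "\<lambda>\<sigma>. map \<sigma> [1..<Suc (card S)]"])
  show "\<forall>xs\<in>permutations_of_set S. map (toF (card S) xs) [1..<Suc (card S)] = xs"
  proof
    fix xs assume xs: "xs \<in> permutations_of_set S"
    have L: "length xs = card S" using perm_len[OF xs] .
    show "map (toF (card S) xs) [1..<Suc (card S)] = xs"
      by (rule nth_equalityI) (auto simp: L toF_def nth_map_upt simp del: upt_Suc)
  qed
  show "\<forall>\<sigma>\<in>rankings S. toF (card S) (map \<sigma> [1..<Suc (card S)]) = \<sigma>"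
  proof
    fix \<sigma> assume s: "\<sigma> \<in> rankings S"
    then have ext: "\<sigma> \<in> extensional {1..card S}" unfolding rankings_def by simp
    show "toF (card S) (map \<sigma> [1..<Suc (card S)]) = \<sigma>"
    proof
      fix n show "toF (card S) (map \<sigma> [1..<Suc (card S)]) n = \<sigma> n"
        using ext by (cases "n \<in> {1..card S}") (auto simp: toF_def extensional_def nth_map_upt simp del: upt_Suc)
    qed
  qed
  show "toF (card S) ` permutations_of_set S \<subseteq> rankings S"
  proof
    fix \<sigma> assume "\<sigma> \<in> toF (card S) ` permutations_of_set S"
    then obtain xs where xs: "xs \<in> permutations_of_set S" and s: "\<sigma> = toF (card S) xs" by auto
    have L: "length xs = card S" using perm_len[OF xs] .
    have d: "distinct xs" "set xs = S" using xs by (auto dest: permutations_of_setD)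
    have inj: "inj_on \<sigma> {1..card S}"
    proof (rule inj_onI)
      fix a b assume a: "a \<in> {1..card S}" and b: "b \<in> {1..card S}" and e: "\<sigma> a = \<sigma> b"
      then have "xs ! (a - 1) = xs ! (b - 1)" using s by (simp add: toF_def)
      moreover have "a - 1 < length xs" "b - 1 < length xs" using a b L by auto
      ultimately have "a - 1 = b - 1" using d(1) nth_eq_iff_index_eq by blast
      then show "a = b" using a b by auto
    qed
    have img: "\<sigma> ` {1..card S} = S"
    proof
      show "\<sigma> ` {1..card S} \<subseteq> S" using s d L by (auto simp: toF_def)
      show "S \<subseteq> \<sigma> ` {1..card S}"
      proof
        fix y assume "y \<in> S"
        then obtain k where k: "k < length xs" "xs ! k = y" using d by (metis in_set_conv_nth)
        then have "\<sigma> (Suc k) = y" "Suc k \<in> {1..card S}" using s L by (auto simp: toF_def)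
        then show "y \<in> \<sigma> ` {1..card S}" by (metis image_eqI)
      qed
    qed
    show "\<sigma> \<in> rankings S" unfolding rankings_def bij_betw_def using inj img s
      by (auto simp: toF_def extensional_def)
  qed
  show "(\<lambda>\<sigma>. map \<sigma> [1..<Suc (card S)]) ` rankings S \<subseteq> permutations_of_set S"
  proof
    fix xs assume "xs \<in> (\<lambda>\<sigma>. map \<sigma> [1..<Suc (card S)]) ` rankings S"
    then obtain \<sigma> where s: "\<sigma> \<in> rankings S" and xs: "xs = map \<sigma> [1..<Suc (card S)]" by auto
    have b: "bij_betw \<sigma> {1..card S} S" using s unfolding rankings_def by simp
    have "set [1..<Suc (card S)] = {1..card S}" by (auto simp del: upt_Suc)
    then show "xs \<in> permutations_of_set S" using b xs
      by (intro permutations_of_setI) (auto simp: bij_betw_def distinct_map simp del: upt_Suc)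
  qed
qed

lemma PL_prob_toF:
  assumes xs: "xs \<in> permutations_of_set S"
  shows "PL_prob \<theta> S (toF (card S) xs) = pl (\<lambda>j. exp (\<theta> j)) xs"
proof -
  let ?w = "\<lambda>j. exp (\<theta> j)"
  have L: "length xs = card S" using perm_len[OF xs] .
  let ?g = "\<lambda>n. ?w (xs ! (n - 1)) / (\<Sum>j\<in>{n..card S}. ?w (xs ! (j - 1)))"
  have "PL_prob \<theta> S (toF (card S) xs) = (\<Prod>n\<in>{1..card S - 1}. ?g n)"
    unfolding PL_prob_def
  proof (rule prod.cong[OF refl])
    fix n assume n: "n \<in> {1..card S - 1}"
    have "(\<Sum>i'\<in>{n..card S}. exp (\<theta> (toF (card S) xs i'))) = (\<Sum>j\<in>{n..card S}. ?w (xs ! (j - 1)))"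
      by (rule sum.cong[OF refl]) (use n in \<open>auto simp: toF_def\<close>)
    moreover have "toF (card S) xs n = xs ! (n - 1)" using n by (auto simp: toF_def)
    ultimately show "exp (\<theta> (toF (card S) xs n)) / (\<Sum>i'\<in>{n..card S}. exp (\<theta> (toF (card S) xs i'))) = ?g n"
      by simp
  qed
  also have "\<dots> = (\<Prod>n\<in>{1..card S}. ?g n)"
  proof (cases "card S")
    case 0
    then show ?thesis by simp
  next
    case (Suc m)
    define g where "g = ?g"
    have g1: "g (card S) = 1" using Suc unfolding g_def by simp
    have e1: "card S - 1 = m" using Suc by simp
    have e2: "{1..card S} = insert (card S) {1..m}" using Suc by auto
    have "(\<Prod>n\<in>insert (card S) {1..m}. g n) = g (card S) * (\<Prod>n\<in>{1..m}. g n)"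
      by (rule prod.insert) (use Suc in auto)
    then have "(\<Prod>n\<in>{1..card S - 1}. g n) = (\<Prod>n\<in>{1..card S}. g n)" by (simp only: e1 e2 g1 mult_1)
    then show ?thesis unfolding g_def .
  qed
  also have "\<dots> = pl ?w xs" using pl_nth[of ?w xs] L by simp
  finally show ?thesis .
qed

lemma pos_iff:
  assumes s: "\<sigma> \<in> rankings S" and i: "i \<in> S" and n: "n \<in> {1..card S}"
  shows "pos S \<sigma> i = n \<longleftrightarrow> \<sigma> n = i"
proof -
  have b: "bij_betw \<sigma> {1..card S} S" using s unfolding rankings_def by simp
  then have inj: "inj_on \<sigma> {1..card S}" and img: "\<sigma> ` {1..card S} = S" by (auto simp: bij_betw_def)
  show ?thesis
  proof
    assume "pos S \<sigma> i = n"
    then show "\<sigma> n = i" unfolding pos_def using f_the_inv_into_f[OF inj] i img by metis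
  next
    assume "\<sigma> n = i"
    then show "pos S \<sigma> i = n" unfolding pos_def using the_inv_into_f_eq[OF inj] n by metis
  qed
qed

lemma pos_in:
  assumes s: "\<sigma> \<in> rankings S" and i: "i \<in> S"
  shows "pos S \<sigma> i \<in> {1..card S} \<and> \<sigma> (pos S \<sigma> i) = i"
proof -
  have b: "bij_betw \<sigma> {1..card S} S" using s unfolding rankings_def by simp
  then have inj: "inj_on \<sigma> {1..card S}" and img: "\<sigma> ` {1..card S} = S" by (auto simp: bij_betw_def)
  have "the_inv_into {1..card S} \<sigma> i \<in> {1..card S}" using the_inv_into_into[OF inj, of i "{1..card S}"] i img by auto
  then show ?thesis unfolding pos_def using f_the_inv_into_f[OF inj, of i] i img by auto
qed

lemma PL_event_Pr:
  assumes "finite S"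
  shows "PL_event \<theta> S E = Pr (\<lambda>j. exp (\<theta> j)) S (\<lambda>xs. E (toF (card S) xs))"
proof -
  have "PL_event \<theta> S E = (\<Sum>\<sigma>\<in>rankings S. if E \<sigma> then PL_prob \<theta> S \<sigma> else 0)"
  proof -
    have fin: "finite (rankings S)" using toF_bij[OF assms] bij_betw_finite finite_permutations_of_set by blast
    show ?thesis unfolding PL_event_def by (rule sum.inter_filter[OF fin])
  qed
  also have "\<dots> = (\<Sum>xs\<in>permutations_of_set S. if E (toF (card S) xs) then PL_prob \<theta> S (toF (card S) xs) else 0)"
    using sum.reindex_bij_betw[OF toF_bij[OF assms], of "\<lambda>\<sigma>. if E \<sigma> then PL_prob \<theta> S \<sigma> else 0"] by simp
  also have "\<dots> = Pr (\<lambda>j. exp (\<theta> j)) S (\<lambda>xs. E (toF (card S) xs))"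
    unfolding Pr_def by (rule sum.cong[OF refl]) (simp add: PL_prob_toF)
  finally show ?thesis .
qed



lemma pos_gt:
  assumes s: "\<sigma> \<in> rankings S" and i: "i \<in> S" and l: "l \<le> card S"
  shows "l < pos S \<sigma> i \<longleftrightarrow> (\<forall>n<l. \<sigma> (Suc n) \<noteq> i)"
proof
  assume a: "l < pos S \<sigma> i"
  show "\<forall>n<l. \<sigma> (Suc n) \<noteq> i"
  proof (intro allI impI)
    fix n assume n: "n < l"
    show "\<sigma> (Suc n) \<noteq> i"
    proof
      assume "\<sigma> (Suc n) = i"
      then have "pos S \<sigma> i = Suc n" using pos_iff[OF s i, of "Suc n"] n l by auto
      then show False using a n by simp
    qed
  qed
next
  assume a: "\<forall>n<l. \<sigma> (Suc n) \<noteq> i"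
  obtain p where p: "p \<in> {1..card S}" "\<sigma> p = i" "pos S \<sigma> i = p" using pos_in[OF s i] by blast
  show "l < pos S \<sigma> i"
  proof (rule ccontr)
    assume "\<not> l < pos S \<sigma> i"
    then have "p - 1 < l" "Suc (p - 1) = p" using p by auto
    then show False using a p by metis
  qed
qed

lemma toF_rank: "finite S \<Longrightarrow> xs \<in> permutations_of_set S \<Longrightarrow> toF (card S) xs \<in> rankings S"
  using toF_bij by (metis bij_betwE)

lemma toF_at: "n \<in> {1..k} \<Longrightarrow> toF k xs n = xs ! (n - 1)"
  by (simp add: toF_def)

theorem lemma4:
  fixes d :: nat and S :: "nat set" and \<theta> :: "nat \<Rightarrow> real" and b :: real
    and i i' l l1 l2 :: nat
  assumes "S \<subseteq> {1..d}" and "card S \<ge> 2"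
    and "\<forall>j\<in>{1..d}. \<bar>\<theta> j\<bar> \<le> b"
    and "i \<in> S" and "i' \<in> S" and "i \<noteq> i'"
    and "1 \<le> l" and "l \<le> card S - 1"
    and "1 \<le> l1" and "l1 \<le> card S - 1"
    and "1 \<le> l2" and "l2 \<le> card S - 1"
  shows "(PL_event \<theta> S (\<lambda>\<sigma>. pos S \<sigma> i > l \<and> pos S \<sigma> i' > l)
           \<ge> exp (-4*b) * (real (card S) - real l) * (real (card S) - real l - 1)
               / (real (card S) * (real (card S) - 1))
             * (1 - real l / real (card S)) powr (2 * exp (2*b) - 2)) \<and>
         (PL_event \<theta> S (\<lambda>\<sigma>. pos S \<sigma> i = l) \<le> exp (6*b) / (real (card S) - real l)) \<and>
         ((real (card S) - real l1 - 1) * (real (card S) - real l2) \<noteq> 0 \<longrightarrow>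
           PL_event \<theta> S (\<lambda>\<sigma>. pos S \<sigma> i = l1 \<and> pos S \<sigma> i' = l2)
             \<le> exp (10*b) / ((real (card S) - real l1 - 1) * (real (card S) - real l2)))"
proof -
  define w where "w = (\<lambda>j. exp (\<theta> j))"
  define lo where "lo = exp (- b)"
  define hi where "hi = exp b"
  define k where "k = card S"
  have fin: "finite S" using assms(1) finite_subset by blast
  have wpos: "\<And>j. w j > 0" unfolding w_def by simp
  have lo: "lo > 0" unfolding lo_def by simp
  have bnd: "\<forall>j\<in>S. lo \<le> w j \<and> w j \<le> hi"
  proof
    fix j assume "j \<in> S"
    then have "\<bar>\<theta> j\<bar> \<le> b" using assms(1,3) by auto
    then show "lo \<le> w j \<and> w j \<le> hi" unfolding lo_def hi_def w_def by auto
  qed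
  have b0: "b \<ge> 0" using assms(1,3,4) by force
  have C: "hi / lo = exp (2 * b)" unfolding hi_def lo_def by (simp add: exp_diff[symmetric])
  have k2: "k \<ge> 2" using assms(2) unfolding k_def .
  have E1: "PL_event \<theta> S (\<lambda>\<sigma>. pos S \<sigma> i > l \<and> pos S \<sigma> i' > l)
      = Pr w S (\<lambda>xs. \<forall>n<l. xs ! n \<noteq> i \<and> xs ! n \<noteq> i')"
    unfolding PL_event_Pr[OF fin] w_def
  proof (rule Pr_cong)
    fix xs assume xs: "xs \<in> permutations_of_set S"
    have r: "toF (card S) xs \<in> rankings S" by (rule toF_rank[OF fin xs])
    have at: "\<And>n. n < l \<Longrightarrow> toF (card S) xs (Suc n) = xs ! n" using assms(8) by (auto simp: toF_def)
    show "(l < pos S (toF (card S) xs) i \<and> l < pos S (toF (card S) xs) i') = (\<forall>n<l. xs ! n \<noteq> i \<and> xs ! n \<noteq> i')"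
      using pos_gt[OF r assms(4), of l] pos_gt[OF r assms(5), of l] assms(8) at by auto
  qed
  have c1: "PL_event \<theta> S (\<lambda>\<sigma>. pos S \<sigma> i > l \<and> pos S \<sigma> i' > l)
           \<ge> exp (-4*b) * (real (card S) - real l) * (real (card S) - real l - 1)
               / (real (card S) * (real (card S) - 1))
             * (1 - real l / real (card S)) powr (2 * exp (2*b) - 2)"
  proof -
    define F where "F = (real k - real l) * (real k - real l - 1) / (real k * (real k - 1)) * (1 - real l / real k) powr (2 * exp (2*b) - 2)"
    have F0: "F \<ge> 0" unfolding F_def using assms(8) k2 unfolding k_def[symmetric]
      by (intro mult_nonneg_nonneg divide_nonneg_pos) auto
    have "exp (-4*b) * F \<le> F" using F0 b0 by (intro mult_left_le_one_le) auto
    also have "F \<le> G (exp (2 * b)) (real k) l"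
      unfolding F_def using GF[of "exp (2 * b)" k l] k2 assms(8) b0 unfolding k_def by auto
    also have "G (exp (2 * b)) (real k) l \<le> Pr w S (\<lambda>xs. \<forall>n<l. xs ! n \<noteq> i \<and> xs ! n \<noteq> i')"
      using posC[OF wpos lo fin assms(4,5,6) _ bnd, of l] assms(8) C unfolding k_def by simp
    finally show ?thesis unfolding E1 F_def k_def by (simp add: algebra_simps)
  qed
  have c2: "PL_event \<theta> S (\<lambda>\<sigma>. pos S \<sigma> i = l) \<le> exp (6*b) / (real (card S) - real l)"
  proof -
    have "PL_event \<theta> S (\<lambda>\<sigma>. pos S \<sigma> i = l) = Pr w S (\<lambda>xs. xs ! (l - 1) = i)"
      unfolding PL_event_Pr[OF fin] w_def
    proof (rule Pr_cong)
      fix xs assume xs: "xs \<in> permutations_of_set S"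
      have r: "toF (card S) xs \<in> rankings S" by (rule toF_rank[OF fin xs])
      have li: "l \<in> {1..card S}" using assms(7,8) k2 unfolding k_def by auto
      show "(pos S (toF (card S) xs) i = l) = (xs ! (l - 1) = i)"
        using pos_iff[OF r assms(4) li] toF_at[OF li] by simp
    qed
    also have "\<dots> \<le> (hi / lo) / (real k - real (l - 1))"
      using posA[OF wpos lo fin assms(4) _ bnd, of "l - 1"] assms(7,8) k2 unfolding k_def by auto
    also have "\<dots> = exp (2 * b) / (real k - real l + 1)" using C assms(7) by (simp add: of_nat_diff)
    also have "\<dots> \<le> exp (6 * b) / (real k - real l)"
      using assms(8) k2 b0 unfolding k_def[symmetric] by (intro frac_le) auto
    finally show ?thesis unfolding k_def .
  qed
  have c3: "(real (card S) - real l1 - 1) * (real (card S) - real l2) \<noteq> 0 \<longrightarrow>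
           PL_event \<theta> S (\<lambda>\<sigma>. pos S \<sigma> i = l1 \<and> pos S \<sigma> i' = l2)
             \<le> exp (10*b) / ((real (card S) - real l1 - 1) * (real (card S) - real l2))"
  proof
    assume nz: "(real (card S) - real l1 - 1) * (real (card S) - real l2) \<noteq> 0"
    have l1i: "l1 \<in> {1..card S}" and l2i: "l2 \<in> {1..card S}" using assms(9-12) k2 unfolding k_def by auto
    have "PL_event \<theta> S (\<lambda>\<sigma>. pos S \<sigma> i = l1 \<and> pos S \<sigma> i' = l2) = Pr w S (\<lambda>xs. xs ! (l1 - 1) = i \<and> xs ! (l2 - 1) = i')"
      unfolding PL_event_Pr[OF fin] w_def
    proof (rule Pr_cong)
      fix xs assume xs: "xs \<in> permutations_of_set S"
      have r: "toF (card S) xs \<in> rankings S" by (rule toF_rank[OF fin xs])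
      show "(pos S (toF (card S) xs) i = l1 \<and> pos S (toF (card S) xs) i' = l2) = (xs ! (l1 - 1) = i \<and> xs ! (l2 - 1) = i')"
        using pos_iff[OF r assms(4) l1i] pos_iff[OF r assms(5) l2i] toF_at[OF l1i] toF_at[OF l2i] by simp
    qed
    also have "\<dots> \<le> (hi / lo) * (hi / lo) / ((real k - real (l1 - 1)) * (real k - real (l2 - 1)))"
      using posB[OF wpos lo fin assms(4,5,6) _ _ bnd, of "l1 - 1" "l2 - 1"] assms(9-12) k2 unfolding k_def by auto
    also have "\<dots> = exp (4 * b) / ((real k - real l1 + 1) * (real k - real l2 + 1))"
      using C assms(9,11) by (simp add: of_nat_diff exp_add[symmetric] algebra_simps)
    also have "\<dots> \<le> exp (10 * b) / ((real k - real l1 - 1) * (real k - real l2))"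
    proof (rule frac_le)
      show "0 \<le> exp (10 * b)" by simp
      show "exp (4 * b) \<le> exp (10 * b)" using b0 by simp
      have a1: "real k - real l1 - 1 \<ge> 0" "real k - real l2 \<ge> 0" using assms(10,12) k2 unfolding k_def by auto
      then show "0 < (real k - real l1 - 1) * (real k - real l2)" using nz unfolding k_def[symmetric]
        by (metis less_eq_real_def mult_nonneg_nonneg)
      show "(real k - real l1 - 1) * (real k - real l2) \<le> (real k - real l1 + 1) * (real k - real l2 + 1)"
        using a1 by (intro mult_mono) auto
    qed
    finally show "PL_event \<theta> S (\<lambda>\<sigma>. pos S \<sigma> i = l1 \<and> pos S \<sigma> i' = l2)
             \<le> exp (10*b) / ((real (card S) - real l1 - 1) * (real (card S) - real l2))" unfolding k_def .
  qed
  show ?thesis using c1 c2 c3 by blast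
qed


end
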